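(* Let $N\ge1$, let $n\ge m$ be positive integers, and let $\Omega_j\in\mathbb R^{n\times n}$, $\Psi_j\in\mathbb R^{m\times m}$ ($1\le j\le N$) be skew-symmetric with $\mathcal D(\Omega)\ge\mathcal D(\Psi)$. Fix initial data $(U_j^0,V_j^0)\in\mathbf{SO}(n)\times\mathbf{SO}(m)$. For $\kappa>\kappa_c$ with $\mathcal L(0)<\nu_2(\kappa)$, let $\{(U_j,V_j)\}$ be the solution of $$\dot U_j=\Omega_jU_j+\frac{\kappa}{N}\sum_{k=1}^N\langle V_j,V_k\rangle_F(U_k-U_jU_k^\top U_j),\quad \dot V_j=\Psi_jV_j+\frac{\kappa}{N}\sum_{k=1}^N\langle U_j,U_k\rangle_F(V_k-V_jV_k^\top V_j)$$ with $(U_j,V_j)(0)=(U_j^0,V_j^0)$. Then $\lim_{\kappa\to\infty}\limsup_{t\to\infty}\mathcal L(t)=0$, the limit in $\kappa$ being over coupling strengths satisfying these conditions, all other data fixed.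
   Context: For real matrices $\langle A,B\rangle_F=\mathrm{tr}(A^\top B)$, $\|A\|_F=\sqrt{\langle A,A\rangle_F}$. $\mathcal D(\Omega)=\max_{i,j}\|\Omega_i-\Omega_j\|_\infty$, $\mathcal D(\Psi)=\max_{i,j}\|\Psi_i-\Psi_j\|_\infty$, with $\|\cdot\|_\infty$ the matrix norm so denoted in the paper (not further specified there). For a solution: $d_{ij}=\langle U_i,U_j\rangle_F$, $c_{ij}=\langle V_i,V_j\rangle_F$, $\mathcal D(\mathcal U)=\max\|U_i-U_j\|_F$, $\mathcal D(\mathcal V)=\max\|V_i-V_j\|_F$, $\mathcal S(\mathcal U)=\max|n-d_{ij}|$, $\mathcal S(\mathcal V)=\max|m-c_{ij}|$, $\mathcal L=\mathcal D(\mathcal U)+\mathcal D(\mathcal V)+\mathcal S(\mathcal U)+\mathcal S(\mathcal V)$. Let $g(s)=2ms-(4n+9)s^2-(2n+\tfrac83)s^3$, $s_*=\frac{-(4n+9)+\sqrt{(4n+9)^2+4m(3n+4)}}{6n+8}$, $\kappa_c=\frac{2(1+3\sqrt n)\mathcal D(\Omega)}{g(s_* )}$, and for $\kappa>\kappa_c$ let $\nu_2(\kappa)$ be the largest positive root of $g(s)=\frac{2(1+3\sqrt n)\mathcal D(\Omega)}{\kappa}$. *)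

theory Defs
  imports "HOL-Analysis.Analysis"
begin

definition frob_inner :: "real^'n^'m \<Rightarrow> real^'n^'m \<Rightarrow> real" where
  "frob_inner A B = trace (transpose A ** B)"

definition frob_norm :: "real^'n^'m \<Rightarrow> real" where
  "frob_norm A = sqrt (frob_inner A A)"

definition mat_inf_norm :: "real^'n::finite^'m::finite \<Rightarrow> real" where
  "mat_inf_norm A = Max (range (\<lambda>i. \<Sum>j\<in>UNIV. \<bar>A$i$j\<bar>))"

definition diam_inf :: "('k::finite \<Rightarrow> real^'n::finite^'n) \<Rightarrow> real" where
  "diam_inf W = Max (range (\<lambda>(i,j). mat_inf_norm (W i - W j)))"

definition diam_F :: "('k::finite \<Rightarrow> real^'n::finite^'n) \<Rightarrow> real" where
  "diam_F X = Max (range (\<lambda>(i,j). frob_norm (X i - X j)))"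

definition sep_F :: "('k::finite \<Rightarrow> real^'n::finite^'n) \<Rightarrow> real" where
  "sep_F X = Max (range (\<lambda>(i,j). \<bar>real CARD('n) - frob_inner (X i) (X j)\<bar>))"

definition lyapL :: "('k::finite \<Rightarrow> real^'n::finite^'n) \<Rightarrow> ('k \<Rightarrow> real^'m::finite^'m) \<Rightarrow> real" where
  "lyapL X Y = diam_F X + diam_F Y + sep_F X + sep_F Y"

definition gfun :: "real \<Rightarrow> real \<Rightarrow> real \<Rightarrow> real" where
  "gfun n m x = 2*m*x - (4*n+9)*(x ^ 2) - (2*n + 8/3)*(x ^ 3)"

definition s_star :: "real \<Rightarrow> real \<Rightarrow> real" where
  "s_star n m = (-(4*n+9) + sqrt ((4*n+9)^2 + 4 * m *(3*n+4))) / (6*n+8)"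

definition kappa_c :: "real \<Rightarrow> real \<Rightarrow> real \<Rightarrow> real" where
  "kappa_c n m DO = 2*(1 + 3 * sqrt n)*DO / gfun n m (s_star n m)"

definition nu2 :: "real \<Rightarrow> real \<Rightarrow> real \<Rightarrow> real \<Rightarrow> real" where
  "nu2 n m DO \<kappa> = (GREATEST s. s > 0 \<and> gfun n m s = 2*(1 + 3 * sqrt n)*DO / \<kappa>)"

end

theory Submission
  imports Defs
begin

lemma frob_inner_eq: "frob_inner (A::real^'n::finite^'m::finite) B = inner A B"
  unfolding frob_inner_def trace_def matrix_matrix_mult_def transpose_def inner_vec_def
  by (simp add: sum.swap[of _ "UNIV::'n set"])

lemma frob_norm_eq: "frob_norm (A::real^'n::finite^'m::finite) = norm A"
  by (simp add: frob_norm_def frob_inner_eq norm_eq_sqrt_inner)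

lemma mat_entry_sq_sum: "inner (A::real^'n::finite^'m::finite) B = (\<Sum>i\<in>UNIV. \<Sum>j\<in>UNIV. A$i$j * B$i$j)"
  by (simp add: inner_vec_def)

lemma inner_mult_left: "inner ((A::real^'n::finite^'m::finite) ** (B::real^'p::finite^'n)) C
   = inner B (transpose A ** C)"
proof -
  have "inner (A ** B) C = (\<Sum>i\<in>UNIV. \<Sum>j\<in>UNIV. \<Sum>k\<in>UNIV. A$i$k * B$k$j * C$i$j)"
    by (simp add: inner_vec_def matrix_matrix_mult_def sum_distrib_right)
  also have "\<dots> = (\<Sum>i\<in>UNIV. \<Sum>k\<in>UNIV. \<Sum>j\<in>UNIV. A$i$k * B$k$j * C$i$j)"
    by (rule sum.cong[OF refl], rule sum.swap)
  also have "\<dots> = (\<Sum>k\<in>UNIV. \<Sum>i\<in>UNIV. \<Sum>j\<in>UNIV. A$i$k * B$k$j * C$i$j)"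
    by (rule sum.swap)
  also have "\<dots> = (\<Sum>k\<in>UNIV. \<Sum>j\<in>UNIV. \<Sum>i\<in>UNIV. A$i$k * B$k$j * C$i$j)"
    by (rule sum.cong[OF refl], rule sum.swap)
  also have "\<dots> = inner B (transpose A ** C)"
    by (simp add: inner_vec_def matrix_matrix_mult_def transpose_def sum_distrib_left mult_ac)
  finally show ?thesis .
qed

lemma inner_mult_right: "inner ((A::real^'n::finite^'m::finite) ** (B::real^'p::finite^'n)) C
   = inner A (C ** transpose B)"
proof -
  have "inner (A ** B) C = (\<Sum>i\<in>UNIV. \<Sum>j\<in>UNIV. \<Sum>k\<in>UNIV. A$i$k * B$k$j * C$i$j)"
    by (simp add: inner_vec_def matrix_matrix_mult_def sum_distrib_right)
  also have "\<dots> = (\<Sum>i\<in>UNIV. \<Sum>k\<in>UNIV. \<Sum>j\<in>UNIV. A$i$k * B$k$j * C$i$j)"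
    by (rule sum.cong[OF refl], rule sum.swap)
  also have "\<dots> = inner A (C ** transpose B)"
    by (simp add: inner_vec_def matrix_matrix_mult_def transpose_def sum_distrib_left mult_ac)
  finally show ?thesis .
qed

lemma inner_transpose: "inner (transpose (A::real^'n::finite^'m::finite)) (transpose B) = inner A B"
  unfolding inner_vec_def transpose_def
  by (simp add: sum.swap[of _ "UNIV::'n set"])

lemma norm_transpose: "norm (transpose (A::real^'n::finite^'m::finite)) = norm A"
  by (simp add: norm_eq_sqrt_inner inner_transpose)

lemma mat_add_rdistrib: "((A::real^'n::finite^'m::finite) + B) ** (C::real^'p::finite^'n) = A ** C + B ** C"
  by (simp add: matrix_matrix_mult_def vec_eq_iff sum.distrib distrib_right)
lemma mat_diff_rdistrib: "((A::real^'n::finite^'m::finite) - B) ** (C::real^'p::finite^'n) = A ** C - B ** C"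
  by (simp add: matrix_matrix_mult_def vec_eq_iff sum_subtractf left_diff_distrib)
lemma mat_diff_ldistrib: "(A::real^'n::finite^'m::finite) ** ((B::real^'p::finite^'n) - C) = A ** B - A ** C"
  by (simp add: matrix_matrix_mult_def vec_eq_iff sum_subtractf right_diff_distrib)
lemma mat_add_ldistrib: "(A::real^'n::finite^'m::finite) ** ((B::real^'p::finite^'n) + C) = A ** B + A ** C"
  by (simp add: matrix_matrix_mult_def vec_eq_iff sum.distrib distrib_left)
lemma mat_scaleR_left: "(r *\<^sub>R (A::real^'n::finite^'m::finite)) ** (B::real^'p::finite^'n) = r *\<^sub>R (A ** B)"
  by (simp add: matrix_matrix_mult_def vec_eq_iff sum_distrib_left mult_ac)
lemma mat_scaleR_right: "(A::real^'n::finite^'m::finite) ** (r *\<^sub>R (B::real^'p::finite^'n)) = r *\<^sub>R (A ** B)"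
  by (simp add: matrix_matrix_mult_def vec_eq_iff sum_distrib_left mult_ac)
lemma mat_sum_right: "(A::real^'n::finite^'m::finite) ** (\<Sum>k\<in>S. (B k::real^'p::finite^'n)) = (\<Sum>k\<in>S. A ** B k)"
  by (induction S rule: infinite_finite_induct) (auto simp: mat_add_ldistrib)
lemma mat_sum_left: "(\<Sum>k\<in>S. (A k::real^'n::finite^'m::finite)) ** (B::real^'p::finite^'n) = (\<Sum>k\<in>S. A k ** B)"
  by (induction S rule: infinite_finite_induct) (auto simp: mat_add_rdistrib)
lemma transpose_add: "transpose ((A::real^'n::finite^'m::finite) + B) = transpose A + transpose B"
  by (simp add: transpose_def vec_eq_iff)
lemma transpose_diff: "transpose ((A::real^'n::finite^'m::finite) - B) = transpose A - transpose B"
  by (simp add: transpose_def vec_eq_iff)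
lemma transpose_uminus: "transpose (- (A::real^'n::finite^'m::finite)) = - transpose A"
  by (simp add: transpose_def vec_eq_iff)
lemma transpose_zero: "transpose (0::real^'n::finite^'m::finite) = 0"
  by (simp add: transpose_def vec_eq_iff)
lemma transpose_sum: "transpose (\<Sum>k\<in>S. (A k::real^'n::finite^'m::finite)) = (\<Sum>k\<in>S. transpose (A k))"
  by (induction S rule: infinite_finite_induct) (auto simp: transpose_add transpose_zero)

lemma norm_sq_entries: "norm (A::real^'n::finite^'m::finite) ^ 2 = (\<Sum>i\<in>UNIV. \<Sum>j\<in>UNIV. (A$i$j)^2)"
proof -
  have "norm A ^ 2 = inner A A" by (rule power2_norm_eq_inner)
  thus ?thesis by (simp add: inner_vec_def power2_eq_square)
qed

lemma norm_mult_le: "norm ((A::real^'n::finite^'m::finite) ** (B::real^'p::finite^'n)) \<le> norm A * norm B"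
proof -
  have e: "(A ** B)$i$j = inner (A$i) (column j B)" for i j
    by (simp add: matrix_matrix_mult_def inner_vec_def column_def)
  have cs: "((A ** B)$i$j)^2 \<le> inner (A$i) (A$i) * inner (column j B) (column j B)" for i j
  proof -
    have "\<bar>inner (A$i) (column j B)\<bar> \<le> norm (A$i) * norm (column j B)"
      by (rule Cauchy_Schwarz_ineq2)
    hence "(inner (A$i) (column j B))^2 \<le> (norm (A$i) * norm (column j B))^2"
      by (metis abs_ge_zero power2_abs power_mono)
    thus ?thesis unfolding e by (simp add: power_mult_distrib power2_norm_eq_inner)
  qed
  have "norm (A ** B) ^ 2 = (\<Sum>i\<in>UNIV. \<Sum>j\<in>UNIV. ((A ** B)$i$j)^2)" by (rule norm_sq_entries)
  also have "\<dots> \<le> (\<Sum>i\<in>UNIV. \<Sum>j\<in>UNIV. inner (A$i) (A$i) * inner (column j B) (column j B))"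
    by (intro sum_mono cs)
  also have "\<dots> = (\<Sum>i\<in>UNIV. inner (A$i) (A$i)) * (\<Sum>j\<in>UNIV. inner (column j B) (column j B))"
    by (simp add: sum_product)
  also have "(\<Sum>i\<in>UNIV. inner (A$i) (A$i)) = norm A ^ 2"
    by (simp add: power2_norm_eq_inner[of A] inner_vec_def[of A])
  also have "(\<Sum>j\<in>UNIV. inner (column j B) (column j B)) = norm B ^ 2"
    unfolding norm_sq_entries by (simp add: inner_vec_def column_def sum.swap[of _ "UNIV::'p set"] power2_eq_square)
  finally have "norm (A ** B) ^ 2 \<le> (norm A * norm B)^2" by (simp add: power_mult_distrib)
  thus ?thesis by (meson norm_ge_zero power2_le_imp_le mult_nonneg_nonneg)
qed

lemma bb_mat: "bounded_bilinear (\<lambda>(A::real^'n::finite^'m::finite) (B::real^'p::finite^'n). A ** B)"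
proof
  show "\<exists>K. \<forall>a b. norm ((a::real^'n::finite^'m::finite) ** (b::real^'p::finite^'n)) \<le> norm a * norm b * K"
    by (rule exI[of _ 1]) (simp add: norm_mult_le)
qed (simp_all add: mat_add_rdistrib mat_add_ldistrib mat_scaleR_left mat_scaleR_right)

lemma bl_transpose: "bounded_linear (transpose :: real^'n::finite^'m::finite \<Rightarrow> real^'m^'n)"
proof
  show "\<exists>K. \<forall>x. norm (transpose (x::real^'n::finite^'m::finite)) \<le> norm x * K"
    by (rule exI[of _ 1]) (simp add: norm_transpose)
qed (simp_all add: transpose_add transpose_scalar)

lemma orth_norm_left: assumes "transpose U ** U = mat 1"
  shows "norm ((U::real^'n::finite^'n) ** (X::real^'p::finite^'n)) = norm X"
proof -
  have "inner (U ** X) (U ** X) = inner X X"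
    by (simp add: inner_mult_left matrix_mul_assoc assms)
  thus ?thesis by (simp add: norm_eq_sqrt_inner)
qed

lemma orth_norm_right: assumes "U ** transpose U = mat 1"
  shows "norm ((X::real^'n::finite^'p::finite) ** (U::real^'n^'n)) = norm X"
proof -
  have "inner (X ** U) (X ** U) = inner X X"
    by (simp add: inner_mult_right matrix_mul_assoc[symmetric] assms)
  thus ?thesis by (simp add: norm_eq_sqrt_inner)
qed

lemma inner_mat1: "inner (mat 1 :: real^'n::finite^'n) (mat 1) = real CARD('n)"
  by (simp add: inner_vec_def mat_def if_distrib cong: if_cong)

lemma orth_norm_sq: assumes "transpose U ** U = mat 1"
  shows "inner (U::real^'n::finite^'n) U = real CARD('n)"
proof -
  have "inner U U = inner (U ** mat 1) U" by simp
  also have "\<dots> = inner (mat 1) (transpose U ** U)" by (rule inner_mult_left)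
  finally show ?thesis using assms inner_mat1 by simp
qed

lemma skew_inner_zero: assumes "transpose W = - W"
  shows "inner (X::real^'p::finite^'n::finite) (W ** X) = 0"
proof -
  have "inner (W ** X) X = inner X (transpose W ** X)" by (rule inner_mult_left)
  also have "\<dots> = - inner X (W ** X)" using assms by (simp add: mat_scaleR_left[of "-1", simplified])
  finally show ?thesis by (simp add: inner_commute)
qed

lemma lohe_identity:
  fixes a k :: "real^'n::finite^'n"
  assumes oa: "transpose a ** a = mat 1" and oa2: "a ** transpose a = mat 1"
    and ok: "transpose k ** k = mat 1"
  shows "k - a ** transpose k ** a = 2 *\<^sub>R (k - a) + a ** (transpose (k - a) ** (k - a))"
proof -
  have 1: "transpose (k - a) ** (k - a) = transpose k ** k - transpose k ** a - transpose a ** k + transpose a ** a"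
    by (simp add: transpose_diff mat_diff_ldistrib mat_diff_rdistrib algebra_simps)
  have 2: "a ** (transpose (k - a) ** (k - a)) = a ** (transpose k ** k) - a ** (transpose k ** a) - a ** (transpose a ** k) + a ** (transpose a ** a)"
    unfolding 1 by (simp add: mat_diff_ldistrib mat_add_ldistrib)
  have 3: "a ** (transpose k ** k) = a" "a ** (transpose a ** a) = a" "a ** (transpose a ** k) = k"
    "a ** (transpose k ** a) = a ** transpose k ** a"
    by (simp_all add: ok oa matrix_mul_assoc oa2)
  show ?thesis unfolding 2 3 by (simp add: scaleR_2 algebra_simps)
qed

lemma pair_term:
  fixes a b k :: "real^'n::finite^'n"
  assumes oa: "transpose a ** a = mat 1" and oa2: "a ** transpose a = mat 1"
    and ok: "transpose k ** k = mat 1"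
    and nab: "norm (a - b) ^ 2 = v" and nbk: "norm (b - k) ^ 2 \<le> v" and v: "v \<le> 1/4"
  shows "inner (a - b) (k - a ** transpose k ** a) \<le> - (norm (k - a) ^ 2) / 2"
proof -
  define E where "E = k - a"
  define F where "F = b - a"
  have id: "k - a ** transpose k ** a = 2 *\<^sub>R E + a ** (transpose E ** E)"
    unfolding E_def by (rule lohe_identity[OF oa oa2 ok])
  have amb: "a - b = - F" unfolding F_def by simp
  have nF: "norm F ^ 2 = v" using nab by (simp add: F_def norm_minus_commute)
  have nF2: "norm F \<le> 1/2"
  proof -
    have "norm F ^ 2 \<le> (1/2)^2" using nF v by (simp add: power2_eq_square)
    thus ?thesis by (rule power2_le_imp_le) simp
  qed
  have bk: "b - k = F - E" unfolding F_def E_def by simp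
  have "norm (F - E) ^ 2 = norm F ^ 2 - 2 * inner F E + norm E ^ 2"
    by (simp add: power2_norm_eq_inner inner_diff_left inner_diff_right inner_commute)
  hence FE: "inner F E \<ge> norm E ^ 2 / 2" using nbk nF bk by simp
  have "\<bar>inner F (a ** (transpose E ** E))\<bar> \<le> norm F * norm (a ** (transpose E ** E))"
    by (rule Cauchy_Schwarz_ineq2)
  also have "norm (a ** (transpose E ** E)) = norm (transpose E ** E)"
    by (rule orth_norm_left[OF oa])
  also have "norm (transpose E ** E) \<le> norm E ^ 2"
    using norm_mult_le[of "transpose E" E] by (simp add: norm_transpose power2_eq_square)
  finally have "\<bar>inner F (a ** (transpose E ** E))\<bar> \<le> norm F * norm E ^ 2"
    by (simp add: mult_left_mono)
  also have "\<dots> \<le> (1/2) * norm E ^ 2" by (rule mult_right_mono[OF nF2]) simp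
  finally have r: "\<bar>inner F (a ** (transpose E ** E))\<bar> \<le> (1/2) * norm E ^ 2" .
  have "inner (a - b) (k - a ** transpose k ** a) = - 2 * inner F E - inner F (a ** (transpose E ** E))"
    unfolding id amb by (simp add: inner_add_right)
  thus ?thesis using FE r unfolding E_def by linarith
qed

lemma par_ineq: "norm (p - q) ^ 2 \<le> 2 * norm (p::'a::real_inner) ^ 2 + 2 * norm q ^ 2"
proof -
  have "norm (p - q) ^ 2 + norm (p + q) ^ 2 = 2 * norm p ^ 2 + 2 * norm q ^ 2"
    by (simp add: power2_norm_eq_inner inner_diff_left inner_diff_right inner_add_left inner_add_right inner_commute)
  thus ?thesis by (smt (verit) zero_le_power2)
qed

lemma weight_bound:
  fixes x y :: "real^'m::finite^'m"
  assumes "transpose x ** x = mat 1" "transpose y ** y = mat 1" "norm (x - y) ^ 2 \<le> v" "v \<le> 1/4"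
  shows "frob_inner x y \<ge> 7/8"
proof -
  have "norm (x - y) ^ 2 = inner x x + inner y y - 2 * inner x y"
    by (simp add: power2_norm_eq_inner inner_diff_left inner_diff_right inner_commute)
  also have "inner x x = real CARD('m)" by (rule orth_norm_sq[OF assms(1)])
  also have "inner y y = real CARD('m)" by (rule orth_norm_sq[OF assms(2)])
  finally have "inner x y = real CARD('m) - norm (x - y) ^ 2 / 2" by linarith
  moreover have "real CARD('m) \<ge> 1" by simp
  ultimately have "inner x y \<ge> 7/8" using assms(3,4) by linarith
  thus ?thesis by (simp add: frob_inner_eq)
qed

lemma side_est:
  fixes u du Om :: "'k::finite \<Rightarrow> real^'n::finite^'n" and z :: "'k \<Rightarrow> real^'m::finite^'m"
  assumes ou: "\<And>j. transpose (u j) ** u j = mat 1 \<and> u j ** transpose (u j) = mat 1"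
    and oz: "\<And>j. transpose (z j) ** z j = mat 1"
    and du: "\<And>j. du j = Om j ** u j + (\<kappa> / real CARD('k)) *\<^sub>R
             (\<Sum>k\<in>UNIV. frob_inner (z j) (z k) *\<^sub>R (u k - u j ** transpose (u k) ** u j))"
    and skew: "\<And>j. transpose (Om j) = - Om j"
    and kp: "\<kappa> \<ge> 0"
    and bu: "\<And>a b. norm (u a - u b) ^ 2 \<le> v" and bz: "\<And>a b. norm (z a - z b) ^ 2 \<le> v"
    and v: "v \<le> 1/4" and vij: "norm (u i - u j) ^ 2 = v"
  shows "2 * inner (u i - u j) (du i - du j) \<le> 2 * sqrt v * norm (Om i - Om j) - 7/16 * \<kappa> * v"
proof -
  define N where "N = real CARD('k)"
  have N: "N > 0" unfolding N_def by simp
  define c where "c a b = frob_inner (z a) (z b)" for a b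
  have c: "c a b \<ge> 7/8" for a b unfolding c_def by (rule weight_bound[OF oz oz bz v])
  define X where "X = u i - u j"
  define Ta where "Ta k = inner X (u k - u i ** transpose (u k) ** u i)" for k
  define Tb where "Tb k = inner (- X) (u k - u j ** transpose (u k) ** u j)" for k
  have Ta: "Ta k \<le> - (norm (u k - u i) ^ 2) / 2" for k
    unfolding Ta_def X_def using ou[of i] ou[of k] bu[of j k] v vij by (intro pair_term) auto
  have Tb: "Tb k \<le> - (norm (u k - u j) ^ 2) / 2" for k
  proof -
    have "Tb k = inner (u j - u i) (u k - u j ** transpose (u k) ** u j)" unfolding Tb_def X_def by simp
    also have "\<dots> \<le> - (norm (u k - u j) ^ 2) / 2"
      using ou[of j] ou[of k] bu[of i k] v vij by (intro pair_term) (auto simp: norm_minus_commute)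
    finally show ?thesis .
  qed
  have each: "c i k * Ta k + c j k * Tb k \<le> - 7/32 * v" for k
  proof -
    have "c i k * Ta k \<le> 7/8 * Ta k"
    proof -
      have "Ta k \<le> 0" using Ta[of k] zero_le_power2[of "norm (u k - u i)"] by linarith
      thus ?thesis using c[of i k] mult_right_mono_neg[of "7/8" "c i k" "Ta k"] by simp
    qed
    moreover have "c j k * Tb k \<le> 7/8 * Tb k"
    proof -
      have "Tb k \<le> 0" using Tb[of k] zero_le_power2[of "norm (u k - u j)"] by linarith
      thus ?thesis using c[of j k] mult_right_mono_neg[of "7/8" "c j k" "Tb k"] by simp
    qed
    moreover have "norm (u k - u i) ^ 2 + norm (u k - u j) ^ 2 \<ge> v / 2"
      using par_ineq[of "u k - u i" "u k - u j"] vij by (simp add: norm_minus_commute)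
    ultimately show ?thesis using Ta[of k] Tb[of k] by linarith
  qed
  have coup: "(\<Sum>k\<in>UNIV. c i k * Ta k + c j k * Tb k) \<le> N * (- 7/32 * v)"
    using sum_mono[of UNIV "\<lambda>k. c i k * Ta k + c j k * Tb k" "\<lambda>k. - 7/32 * v", OF each]
    by (simp add: N_def)
  have freq: "inner X (Om i ** u i - Om j ** u j) \<le> sqrt v * norm (Om i - Om j)"
  proof -
    have "Om i ** u i - Om j ** u j = Om i ** X + (Om i - Om j) ** u j"
      by (simp add: X_def mat_diff_ldistrib mat_diff_rdistrib)
    hence "inner X (Om i ** u i - Om j ** u j) = inner X ((Om i - Om j) ** u j)"
      by (simp add: inner_add_right skew_inner_zero[OF skew])
    also have "\<dots> \<le> norm X * norm ((Om i - Om j) ** u j)" by (rule norm_cauchy_schwarz)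
    also have "norm ((Om i - Om j) ** u j) = norm (Om i - Om j)" by (rule orth_norm_right) (use ou in auto)
    also have "norm X = sqrt v" using vij by (simp add: X_def real_sqrt_unique[symmetric])
    finally show ?thesis .
  qed
  have split: "inner X (du i - du j) = inner X (Om i ** u i - Om j ** u j)
      + (\<kappa> / N) * (\<Sum>k\<in>UNIV. c i k * Ta k + c j k * Tb k)"
  proof -
    define Si where "Si = (\<Sum>k\<in>UNIV. c i k *\<^sub>R (u k - u i ** transpose (u k) ** u i))"
    define Sj where "Sj = (\<Sum>k\<in>UNIV. c j k *\<^sub>R (u k - u j ** transpose (u k) ** u j))"
    have d: "du i - du j = (Om i ** u i - Om j ** u j) + ((\<kappa> / N) *\<^sub>R Si - (\<kappa> / N) *\<^sub>R Sj)"
      by (simp add: du[of i] du[of j] Si_def Sj_def c_def N_def)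
    have si: "inner X Si = (\<Sum>k\<in>UNIV. c i k * Ta k)"
      by (simp add: Si_def Ta_def inner_sum_right)
    have sj: "inner X Sj = - (\<Sum>k\<in>UNIV. c j k * Tb k)"
      by (simp add: Sj_def Tb_def inner_sum_right sum_negf[symmetric])
    have "inner X (du i - du j) = inner X (Om i ** u i - Om j ** u j) + (\<kappa> / N) * inner X Si - (\<kappa> / N) * inner X Sj"
      unfolding d by (simp add: inner_add_right inner_diff_right)
    also have "\<dots> = inner X (Om i ** u i - Om j ** u j) + (\<kappa> / N) * (\<Sum>k\<in>UNIV. c i k * Ta k + c j k * Tb k)"
      unfolding si sj by (simp add: sum.distrib algebra_simps)
    finally show ?thesis .
  qed
  have "(\<kappa> / N) * (\<Sum>k\<in>UNIV. c i k * Ta k + c j k * Tb k) \<le> (\<kappa> / N) * (N * (- 7/32 * v))"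
    by (rule mult_left_mono[OF coup]) (use kp N in simp)
  also have "\<dots> = - 7/32 * \<kappa> * v" using N by simp
  finally show ?thesis using freq split unfolding X_def by linarith
qed

lemma barrier:
  fixes f f' :: "'p::finite \<Rightarrow> real \<Rightarrow> real" and \<phi> \<phi>' :: "real \<Rightarrow> real"
  assumes df: "\<And>p t. 0 \<le> t \<Longrightarrow> t \<le> T \<Longrightarrow> (f p has_real_derivative f' p t) (at t within {0..})"
    and dphi: "\<And>t. 0 \<le> t \<Longrightarrow> t \<le> T \<Longrightarrow> (\<phi> has_real_derivative \<phi>' t) (at t within {0..})"
    and init: "\<And>p. f p 0 < \<phi> 0"
    and step: "\<And>p t. 0 < t \<Longrightarrow> t \<le> T \<Longrightarrow> f p t = \<phi> t \<Longrightarrow> (\<forall>q. f q t \<le> \<phi> t) \<Longrightarrow> f' p t < \<phi>' t"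
    and t: "0 \<le> t" "t \<le> T"
  shows "f p t < \<phi> t"
proof (rule ccontr)
  assume "\<not> f p t < \<phi> t"
  define g where "g q x = f q x - \<phi> x" for q x
  have dg: "(g q has_real_derivative (f' q x - \<phi>' x)) (at x within {0..})" if "0 \<le> x" "x \<le> T" for q x
    unfolding g_def using df[OF that] dphi[OF that] by (intro derivative_intros)
  have cw: "continuous (at x within {0..T}) (g q)" if "x \<in> {0..T}" for q x
  proof -
    have "continuous (at x within {0..}) (g q)"
      using that by (intro DERIV_continuous[OF dg]) auto
    thus ?thesis by (rule continuous_within_subset) auto
  qed
  hence cont: "continuous_on {0..T} (g q)" for q
    by (simp add: continuous_on_eq_continuous_within)
  define S where "S = (\<Union>q. {0..T} \<inter> g q -` {0..})"
  have clS: "closed S" unfolding S_def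
  proof (rule closed_Union)
    show "finite (range (\<lambda>q. {0..T} \<inter> g q -` {0..}))" by simp
    show "\<forall>X\<in>range (\<lambda>q. {0..T} \<inter> g q -` {0..}). closed X"
      using continuous_closed_preimage[OF cont closed_atLeastAtMost closed_atLeast] by blast
  qed
  have tS: "t \<in> S" unfolding S_def g_def using \<open>\<not> f p t < \<phi> t\<close> t by (auto intro!: exI[of _ p])
  have bdd: "bdd_below S" unfolding S_def by (auto intro!: bdd_belowI[of _ 0])
  define T0 where "T0 = Inf S"
  have T0S: "T0 \<in> S" unfolding T0_def using closed_contains_Inf[OF _ bdd clS] tS by blast
  then obtain p0 where p0: "g p0 T0 \<ge> 0" and T0r: "0 \<le> T0" "T0 \<le> T" unfolding S_def by auto
  have T0pos: "T0 > 0"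
  proof (rule ccontr)
    assume "\<not> T0 > 0" hence "T0 = 0" using T0r by simp
    thus False using p0 init[of p0] by (simp add: g_def)
  qed
  have before: "g q x < 0" if "0 \<le> x" "x < T0" for q x
  proof (rule ccontr)
    assume "\<not> g q x < 0"
    hence "x \<in> S" unfolding S_def using that T0r by (auto intro!: exI[of _ q])
    hence "T0 \<le> x" unfolding T0_def by (rule cInf_lower[OF _ bdd])
    thus False using that by simp
  qed
  have atT0: "g q T0 \<le> 0" for q
  proof (rule ccontr)
    assume neg: "\<not> g q T0 \<le> 0"
    have gpos: "g q T0 > 0" using neg by simp
    have "\<forall>\<epsilon>>0. \<exists>\<delta>>0. \<forall>x'\<in>{0..T}. dist x' T0 < \<delta> \<longrightarrow> dist (g q x') (g q T0) < \<epsilon>"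
      using cw[of T0 q] T0r unfolding continuous_within_eps_delta by simp
    from this[rule_format, OF gpos] obtain d where
      d: "d > 0" "\<forall>x'\<in>{0..T}. dist x' T0 < d \<longrightarrow> dist (g q x') (g q T0) < g q T0"
      by blast
    define x' where "x' = T0 - min d T0 / 2"
    have "x' \<in> {0..T}" "dist x' T0 < d" "0 \<le> x'" "x' < T0" using d(1) T0pos T0r
      by (auto simp: x'_def dist_real_def)
    hence "dist (g q x') (g q T0) < g q T0" using d(2) by blast
    moreover have "g q x' < 0" using before \<open>0 \<le> x'\<close> \<open>x' < T0\<close> by blast
    ultimately show False by (simp add: dist_real_def)
  qed
  have eq: "f p0 T0 = \<phi> T0" using p0 atT0[of p0] by (simp add: g_def)
  have all: "\<forall>q. f q T0 \<le> \<phi> T0" using atT0 by (simp add: g_def)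
  have neg: "f' p0 T0 - \<phi>' T0 < 0" using step[OF T0pos T0r(2) eq all] by simp
  obtain d where d: "d > 0" "\<forall>h>0. T0 - h \<in> {0..} \<longrightarrow> h < d \<longrightarrow> g p0 T0 < g p0 (T0 - h)"
    using has_real_derivative_neg_dec_left[OF dg[OF T0r] neg] by blast
  define h where "h = min d T0 / 2"
  have "h > 0" "T0 - h \<in> {0..}" "h < d" "0 \<le> T0 - h" "T0 - h < T0" using d(1) T0pos by (auto simp: h_def)
  hence "g p0 T0 < g p0 (T0 - h)" "g p0 (T0 - h) < 0" using d(2) before by auto
  thus False using p0 by simp
qed

lemma barrier1:
  fixes f f' \<phi> \<phi>' :: "real \<Rightarrow> real"
  assumes "\<And>t. 0 \<le> t \<Longrightarrow> t \<le> T \<Longrightarrow> (f has_real_derivative f' t) (at t within {0..})"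
    and "\<And>t. 0 \<le> t \<Longrightarrow> t \<le> T \<Longrightarrow> (\<phi> has_real_derivative \<phi>' t) (at t within {0..})"
    and "f 0 < \<phi> 0"
    and "\<And>t. 0 < t \<Longrightarrow> t \<le> T \<Longrightarrow> f t = \<phi> t \<Longrightarrow> f' t < \<phi>' t"
    and "0 \<le> t" "t \<le> T"
  shows "f t < \<phi> t"
  using barrier[of T "\<lambda>_::unit. f" "\<lambda>_. f'" \<phi> \<phi>' t "()"] assms by blast

lemma inner_sym_transpose:
  assumes "transpose Y = Y"
  shows "inner (Y::real^'n::finite^'n) (transpose B) = inner Y B"
  using inner_transpose[of Y B] assms by simp

lemma sym_skew_zero:
  assumes "transpose Y = Y" "transpose S = - S"
  shows "inner (Y::real^'n::finite^'n) S = 0"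
  using inner_sym_transpose[OF assms(1), of S] assms(2) by simp

lemma orth_alg:
  fixes u Om :: "real^'n::finite^'n" and z :: "'k \<Rightarrow> real^'n^'n" and w :: "'k \<Rightarrow> real"
  assumes skew: "transpose Om = - Om"
  defines "Y \<equiv> transpose u ** u - mat 1"
  shows "inner Y (transpose u ** (Om ** u + c *\<^sub>R (\<Sum>k\<in>S. w k *\<^sub>R (z k - u ** transpose (z k) ** u))))
     = - c * (\<Sum>k\<in>S. w k * inner Y (Y ** transpose (transpose u ** z k)))"
proof -
  have Ysym: "transpose Y = Y" unfolding Y_def by (simp add: transpose_diff matrix_transpose_mul)
  have om: "inner Y (transpose u ** (Om ** u)) = 0"
    by (rule sym_skew_zero[OF Ysym]) (simp add: matrix_transpose_mul skew matrix_mul_assoc transpose_uminus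
        mat_scaleR_left[of "-1", simplified] mat_scaleR_right[of _ "-1", simplified])
  have tk: "inner Y (transpose u ** (z k - u ** transpose (z k) ** u)) = - inner Y (Y ** transpose (transpose u ** z k))" for k
  proof -
    have X: "transpose u ** u = Y + mat 1" unfolding Y_def by simp
    have "transpose u ** (u ** transpose (z k) ** u) = (transpose u ** u) ** (transpose (z k) ** u)"
      by (simp add: matrix_mul_assoc)
    also have "\<dots> = Y ** transpose (transpose u ** z k) + transpose (transpose u ** z k)"
      unfolding X by (simp add: mat_add_rdistrib matrix_transpose_mul)
    finally have e: "transpose u ** (u ** transpose (z k) ** u) = Y ** transpose (transpose u ** z k) + transpose (transpose u ** z k)" .
    show ?thesis
      unfolding mat_diff_ldistrib e by (simp add: inner_diff_right inner_add_right inner_sym_transpose[OF Ysym])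
  qed
  show ?thesis
    by (simp add: mat_add_ldistrib mat_scaleR_right mat_sum_right inner_add_right inner_sum_right om tk
        sum_negf sum_distrib_left)
qed

lemma orth_preserve:
  fixes u :: "real \<Rightarrow> real^'n::finite^'n" and z :: "'k::finite \<Rightarrow> real \<Rightarrow> real^'n^'n"
    and w :: "'k \<Rightarrow> real \<Rightarrow> real" and Om :: "real^'n^'n"
  assumes du: "\<And>t. 0 \<le> t \<Longrightarrow> (u has_vector_derivative
      (Om ** u t + c *\<^sub>R (\<Sum>k\<in>UNIV. w k t *\<^sub>R (z k t - u t ** transpose (z k t) ** u t)))) (at t within {0..})"
    and cz: "\<And>k. continuous_on {0..} (z k)" and cw: "\<And>k. continuous_on {0..} (w k)"
    and skew: "transpose Om = - Om"
    and u0: "transpose (u 0) ** u 0 = mat 1" and t: "0 \<le> t"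
  shows "transpose (u t) ** u t = mat 1"
proof -
  define u' where "u' t = Om ** u t + c *\<^sub>R (\<Sum>k\<in>UNIV. w k t *\<^sub>R (z k t - u t ** transpose (z k t) ** u t))" for t
  define Y where "Y t = transpose (u t) ** u t - mat 1" for t
  define h where "h t = inner (Y t) (Y t)" for t
  define K where "K t = \<bar>c\<bar> * (\<Sum>k\<in>UNIV. \<bar>w k t\<bar> * norm (transpose (u t) ** z k t))" for t
  have du': "(u has_vector_derivative u' s) (at s within {0..})" if "0 \<le> s" for s
    unfolding u'_def using du[OF that] .
  have Ysym: "transpose (Y s) = Y s" for s unfolding Y_def by (simp add: transpose_diff matrix_transpose_mul)
  have dY: "(Y has_vector_derivative (transpose (u s) ** u' s + transpose (u' s) ** u s)) (at s within {0..})"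
    if "0 \<le> s" for s
  proof -
    have dT: "((\<lambda>s. transpose (u s)) has_vector_derivative transpose (u' s)) (at s within {0..})"
      by (rule bounded_linear.has_vector_derivative[OF bl_transpose du'[OF that]])
    have "((\<lambda>s. transpose (u s) ** u s) has_vector_derivative (transpose (u s) ** u' s + transpose (u' s) ** u s)) (at s within {0..})"
      using bounded_bilinear.has_vector_derivative[OF bb_mat dT du'[OF that]] by simp
    hence "((\<lambda>s. transpose (u s) ** u s - mat 1) has_vector_derivative (transpose (u s) ** u' s + transpose (u' s) ** u s) - 0) (at s within {0..})"
      by (intro has_vector_derivative_diff) auto
    thus ?thesis unfolding Y_def by simp
  qed
  have dh: "(h has_real_derivative 4 * inner (Y s) (transpose (u s) ** u' s)) (at s within {0..})" if "0 \<le> s" for s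
  proof -
    have "(h has_vector_derivative (inner (Y s) (transpose (u s) ** u' s + transpose (u' s) ** u s)
        + inner (transpose (u s) ** u' s + transpose (u' s) ** u s) (Y s))) (at s within {0..})"
      unfolding h_def using bounded_bilinear.has_vector_derivative[OF bounded_bilinear_inner dY[OF that] dY[OF that]] by simp
    moreover have "transpose (u' s) ** u s = transpose (transpose (u s) ** u' s)" by (simp add: matrix_transpose_mul)
    ultimately have "(h has_vector_derivative 4 * inner (Y s) (transpose (u s) ** u' s)) (at s within {0..})"
      by (simp add: inner_add_right inner_add_left inner_commute[of _ "Y s"] inner_sym_transpose[OF Ysym])
    thus ?thesis by (simp add: has_real_derivative_iff_has_vector_derivative)
  qed
  have hbound: "4 * inner (Y s) (transpose (u s) ** u' s) \<le> 4 * K s * h s" for s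
  proof -
    have "inner (Y s) (transpose (u s) ** u' s) = - c * (\<Sum>k\<in>UNIV. w k s * inner (Y s) (Y s ** transpose (transpose (u s) ** z k s)))"
      unfolding u'_def Y_def by (rule orth_alg[OF skew])
    also have "\<dots> \<le> \<bar>c\<bar> * (\<Sum>k\<in>UNIV. \<bar>w k s\<bar> * (norm (transpose (u s) ** z k s) * h s))"
    proof -
      have pk: "\<bar>w k s * inner (Y s) (Y s ** transpose (transpose (u s) ** z k s))\<bar> \<le> \<bar>w k s\<bar> * (norm (transpose (u s) ** z k s) * h s)" for k
      proof -
        have "\<bar>inner (Y s) (Y s ** transpose (transpose (u s) ** z k s))\<bar> \<le> norm (Y s) * norm (Y s ** transpose (transpose (u s) ** z k s))"
          by (rule Cauchy_Schwarz_ineq2)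
        also have "\<dots> \<le> norm (Y s) * (norm (Y s) * norm (transpose (u s) ** z k s))"
          using norm_mult_le[of "Y s" "transpose (transpose (u s) ** z k s)"]
          by (intro mult_left_mono) (simp_all add: norm_transpose)
        also have "\<dots> = norm (transpose (u s) ** z k s) * h s"
          by (simp add: h_def power2_norm_eq_inner[symmetric] power2_eq_square)
        finally show ?thesis by (simp add: abs_mult mult_left_mono)
      qed
      have sm: "(\<Sum>k\<in>UNIV. \<bar>w k s * inner (Y s) (Y s ** transpose (transpose (u s) ** z k s))\<bar>) \<le> (\<Sum>k\<in>UNIV. \<bar>w k s\<bar> * (norm (transpose (u s) ** z k s) * h s))"
        by (rule sum_mono) (rule pk)
      have "\<bar>\<Sum>k\<in>UNIV. w k s * inner (Y s) (Y s ** transpose (transpose (u s) ** z k s))\<bar> \<le> (\<Sum>k\<in>UNIV. \<bar>w k s\<bar> * (norm (transpose (u s) ** z k s) * h s))"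
        by (rule order_trans[OF sum_abs sm])
      then have "- c * (\<Sum>k\<in>UNIV. w k s * inner (Y s) (Y s ** transpose (transpose (u s) ** z k s))) \<le> \<bar>c\<bar> * (\<Sum>k\<in>UNIV. \<bar>w k s\<bar> * (norm (transpose (u s) ** z k s) * h s))"
      proof -
        let ?S = "\<Sum>k\<in>UNIV. w k s * inner (Y s) (Y s ** transpose (transpose (u s) ** z k s))"
        have "- c * ?S \<le> \<bar>- c * ?S\<bar>" by (rule abs_ge_self)
        also have "\<bar>- c * ?S\<bar> = \<bar>c\<bar> * \<bar>?S\<bar>" by (simp add: abs_mult)
        finally have "- c * ?S \<le> \<bar>c\<bar> * \<bar>?S\<bar>" .
        thus ?thesis using mult_left_mono[OF \<open>\<bar>?S\<bar> \<le> _\<close>, of "\<bar>c\<bar>"] by simp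
      qed
      thus ?thesis .
    qed
    also have "\<dots> = K s * h s" by (simp add: K_def sum_distrib_right sum_distrib_left mult_ac)
    finally show ?thesis by simp
  qed
  have cu: "continuous_on {0..} u" by (rule continuous_on_vector_derivative) (use du' in auto)
  have ctu: "continuous_on {0..} (\<lambda>s. transpose (u s))" by (rule bounded_linear.continuous_on[OF bl_transpose cu])
  have cB: "continuous_on {0..} (\<lambda>s. transpose (u s) ** z k s)" for k
    using bounded_bilinear.continuous_on[OF bb_mat ctu cz[of k]] by simp
  have cK: "continuous_on {0..} K" unfolding K_def
    by (intro continuous_intros cw cB)
  have "compact (K ` {0..t})"
    by (rule compact_continuous_image[OF continuous_on_subset[OF cK] compact_Icc]) auto
  then obtain KB where KB: "\<And>s. s \<in> {0..t} \<Longrightarrow> norm (K s) \<le> KB"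
    using compact_imp_bounded bounded_iff by (metis imageI)
  have KB0: "KB \<ge> 0" using KB[of 0] t by (meson atLeastAtMost_iff norm_ge_zero order_trans order_refl)
  have h0: "h 0 = 0" unfolding h_def Y_def using u0 by simp
  have hnn: "h s \<ge> 0" for s unfolding h_def by simp
  have small: "h t < \<epsilon> * exp ((4 * KB + 1) * t)" if e: "\<epsilon> > 0" for \<epsilon>
  proof -
    show ?thesis
    proof (rule barrier1[where f'="\<lambda>s. 4 * inner (Y s) (transpose (u s) ** u' s)"
          and \<phi>'="\<lambda>s. \<epsilon> * (exp ((4 * KB + 1) * s) * (4 * KB + 1))" and T=t and \<phi>="\<lambda>s. \<epsilon> * exp ((4 * KB + 1) * s)"])
      show "(h has_real_derivative 4 * inner (Y s) (transpose (u s) ** u' s)) (at s within {0..})"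
        if "0 \<le> s" "s \<le> t" for s using dh[OF that(1)] by simp
      show "((\<lambda>s. \<epsilon> * exp ((4 * KB + 1) * s)) has_real_derivative \<epsilon> * (exp ((4 * KB + 1) * s) * (4 * KB + 1))) (at s within {0..})"
        for s by (auto intro!: derivative_eq_intros)
      show "h 0 < \<epsilon> * exp ((4 * KB + 1) * 0)" using h0 e by simp
      show "4 * inner (Y s) (transpose (u s) ** u' s) < \<epsilon> * (exp ((4 * KB + 1) * s) * (4 * KB + 1))"
        if "0 < s" "s \<le> t" "h s = \<epsilon> * exp ((4 * KB + 1) * s)" for s
      proof -
        have Ks: "K s \<le> KB" using KB[of s] that by auto
        have pos: "\<epsilon> * exp ((4 * KB + 1) * s) > 0" using e by simp
        have "4 * inner (Y s) (transpose (u s) ** u' s) \<le> 4 * K s * h s" by (rule hbound)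
        also have "\<dots> \<le> 4 * KB * h s" using Ks hnn[of s] by (simp add: mult_right_mono)
        also have "\<dots> = 4 * KB * (\<epsilon> * exp ((4 * KB + 1) * s))" using that(3) by simp
        also have "\<dots> < \<epsilon> * (exp ((4 * KB + 1) * s) * (4 * KB + 1))" using pos by (simp add: algebra_simps)
        finally show ?thesis .
      qed
    qed (use t in auto)
  qed
  have "h t \<le> 0"
  proof (rule ccontr)
    assume "\<not> h t \<le> 0"
    hence hp: "h t > 0" by simp
    define E where "E = exp ((4 * KB + 1) * t)"
    have E: "E > 0" unfolding E_def by simp
    have "h t < (h t / (2 * E)) * E" using small[of "h t / (2 * E)"] hp E unfolding E_def by simp
    thus False using hp E by (simp add: field_simps)
  qed
  hence "Y t = 0" using hnn[of t] unfolding h_def by simp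
  thus ?thesis unfolding Y_def by simp
qed

lemma gfun_cont: "continuous_on S (gfun n m)"
  unfolding gfun_def by (intro continuous_intros)

lemma sstar_pos_g:
  fixes n m :: real
  assumes n: "n \<ge> 1" and m: "m \<ge> 1"
  shows "s_star n m > 0" "gfun n m (s_star n m) > 0"
proof -
  define A where "A = 4*n+9"
  define B where "B = 6*n+8"
  define R where "R = sqrt ((4*n+9)^2 + 4 * m *(3*n+4))"
  have A: "A > 0" and B: "B > 0" using n by (auto simp: A_def B_def)
  have nn: "0 \<le> (4*n+9)^2 + 4 * m *(3*n+4)" by (rule add_nonneg_nonneg) (use n m in simp_all)
  have R2': "R^2 = (4*n+9)^2 + 4 * m *(3*n+4)" unfolding R_def by (rule real_sqrt_pow2[OF nn])
  have R2: "R^2 = A^2 + 2 * m * B" unfolding R2' A_def B_def by (simp add: algebra_simps)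
  have R0: "R \<ge> 0" unfolding R_def using nn by simp
  have RA: "R > A"
  proof -
    have "A^2 < R^2" using R2 m B by simp
    thus ?thesis using R0 A by (simp add: power_less_imp_less_base)
  qed
  define s where "s = s_star n m"
  have s_def': "s = (R - A) / B" unfolding s_def s_star_def R_def A_def B_def by simp
  have sp: "s > 0" unfolding s_def' using RA B by simp
  have Bs: "B * s = R - A" unfolding s_def' using B by simp
  have "B * (B * s^2 + 2 * A * s) = (B * s)^2 + 2 * A * (B * s)" by (simp add: algebra_simps power2_eq_square)
  also have "\<dots> = R^2 - A^2" unfolding Bs by (simp add: algebra_simps power2_eq_square)
  also have "\<dots> = B * (2 * m)" using R2 by simp
  finally have key: "B * s^2 + 2 * A * s = 2 * m" using B by simp
  have "gfun n m s = s * (2*m - A * s - (B/3) * s^2)"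
    unfolding gfun_def A_def B_def by (simp add: algebra_simps power2_eq_square power3_eq_cube)
  also have "2*m - A * s - (B/3) * s^2 = A * s + (2*B/3) * s^2" using key by simp
  finally have "gfun n m s = s * (A * s + (2*B/3) * s^2)" .
  moreover have "A * s + (2*B/3) * s^2 > 0" using A B sp by (simp add: add_pos_pos)
  ultimately show "s_star n m > 0" "gfun n m (s_star n m) > 0" using sp unfolding s_def by simp_all
qed

lemma adm_facts:
  fixes n m DO \<kappa> :: real
  assumes n: "n \<ge> 1" and m: "m \<ge> 1" and mn: "m \<le> n" and DO: "DO \<ge> 0"
    and k: "\<kappa> > kappa_c n m DO"
  shows "\<kappa> > 0" "nu2 n m DO \<kappa> < 1/2"
proof -
  define g where "g = gfun n m"
  define ss where "ss = s_star n m"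
  define c where "c = 2*(1 + 3 * sqrt n)*DO"
  have c0: "c \<ge> 0" unfolding c_def using DO n by simp
  have gs: "g ss > 0" "ss > 0" using sstar_pos_g[OF n m] unfolding g_def ss_def by auto
  have kc: "kappa_c n m DO = c / g ss" unfolding kappa_c_def c_def g_def ss_def by simp
  have kc0: "kappa_c n m DO \<ge> 0" unfolding kc using c0 gs by simp
  show kp: "\<kappa> > 0" using k kc0 by simp
  define y where "y = c / \<kappa>"
  have y0: "y \<ge> 0" unfolding y_def using c0 kp by simp
  have ylt: "y < g ss"
  proof -
    have "c / g ss < \<kappa>" using k kc by simp
    hence "c < \<kappa> * g ss" using gs by (simp add: divide_less_eq mult.commute)
    thus ?thesis unfolding y_def using kp by (simp add: divide_less_eq mult.commute)
  qed
  have gneg: "g s < 0" if "s \<ge> 1" for s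
  proof -
    have "g s = s * (2*m - (4*n+9) * s) - (2*n + 8/3) * s^3"
      unfolding g_def gfun_def by (simp add: algebra_simps power2_eq_square power3_eq_cube)
    moreover have "2*m - (4*n+9) * s < 0"
    proof -
      have "(4 * n + 9) * (s - 1) \<ge> 0" using that n by simp
      moreover have "2 * m - (4 * n + 9) * s = (2 * m - 4 * n - 9) - (4 * n + 9) * (s - 1)" by (simp add: algebra_simps)
      ultimately show ?thesis using mn n by linarith
    qed
    moreover have "(2*n + 8/3) * s^3 \<ge> 0" using that n by simp
    ultimately show ?thesis using that by (smt (verit) mult_pos_neg)
  qed
  have ss1: "ss < 1" using gneg[of ss] gs by (cases "ss \<ge> 1") auto
  obtain s0 where s0: "ss \<le> s0" "s0 \<le> 1" "g s0 = y"
    using IVT2'[of g 1 y ss] gneg[of 1] ylt y0 ss1 gfun_cont unfolding g_def by force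
  have s0p: "s0 > 0" using s0 gs by simp
  have Pbound: "s < 1/2" if "s > 0" "g s = y" for s
  proof -
    have "g s = s * (2*m - (4*n+9) * s - (2*n + 8/3) * s^2)"
      unfolding g_def gfun_def by (simp add: algebra_simps power2_eq_square power3_eq_cube)
    hence "s * (2*m - (4*n+9) * s - (2*n + 8/3) * s^2) \<ge> 0" using that y0 by simp
    hence "2*m - (4*n+9) * s - (2*n + 8/3) * s^2 \<ge> 0" using that(1) by (simp add: zero_le_mult_iff)
    moreover have "(2*n + 8/3) * s^2 \<ge> 0" using n by simp
    ultimately have "(4*n+9) * s \<le> 2 * m" by linarith
    hence "(4*n+9) * s \<le> 2 * n" using mn by linarith
    moreover have "(4*n+9) * (1/2) = 2 * n + 9/2" by simp
    ultimately have "(4*n+9) * s < (4*n+9) * (1/2)" by linarith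
    thus ?thesis using n by (simp add: mult_less_cancel_left)
  qed
  define S' where "S' = {s0..1} \<inter> g -` {y}"
  have clS: "closed S'" unfolding S'_def
    by (rule continuous_closed_preimage) (auto simp: g_def gfun_cont)
  have neS: "S' \<noteq> {}" using s0 unfolding S'_def by auto
  have bdS: "bdd_above S'" unfolding S'_def by (auto intro: bdd_aboveI[of _ 1])
  define M where "M = Sup S'"
  have MS: "M \<in> S'" unfolding M_def by (rule closed_contains_Sup[OF neS bdS clS])
  have PM: "M > 0 \<and> g M = y" using MS s0p unfolding S'_def by auto
  have "nu2 n m DO \<kappa> = M"
    unfolding nu2_def
  proof (rule Greatest_equality)
    show "M > 0 \<and> gfun n m M = 2*(1 + 3 * sqrt n)*DO / \<kappa>" using PM unfolding g_def y_def c_def by simp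
    fix s assume "s > 0 \<and> gfun n m s = 2*(1 + 3 * sqrt n)*DO / \<kappa>"
    hence sP: "s > 0" "g s = y" unfolding g_def y_def c_def by auto
    show "s \<le> M"
    proof (cases "s \<ge> s0")
      case True
      hence "s \<in> S'" using Pbound[OF sP] sP unfolding S'_def by auto
      thus ?thesis unfolding M_def by (rule cSup_upper[OF _ bdS])
    next
      case False
      moreover have "s0 \<le> M" using MS unfolding S'_def by auto
      ultimately show ?thesis by simp
    qed
  qed
  thus "nu2 n m DO \<kappa> < 1/2" using Pbound PM by simp
qed

lemma exp_decay_eventually:
  fixes l a b :: real
  assumes l: "l > 0" and b: "b > 0" and a: "a \<ge> 0"
  shows "eventually (\<lambda>t. a * exp (- l * t) < b) at_top"
proof -
  define T1 where "T1 = (a + 1) / (b * l)"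
  have T1p: "T1 > 0" unfolding T1_def using a b l by simp
  have "a * exp (- l * t) < b" if t: "t \<ge> T1" for t
  proof -
    have tp: "t > 0" using t T1p by simp
    have lt: "l * t > 0" using l tp by simp
    have "1 + l * t \<le> exp (l * t)" by (rule exp_ge_add_one_self)
    hence "1 / exp (l * t) \<le> 1 / (1 + l * t)" using lt by (intro divide_left_mono) auto
    hence e: "exp (- l * t) \<le> 1 / (1 + l * t)" by (simp add: exp_minus inverse_eq_divide)
    have "a * exp (- l * t) \<le> a * (1 / (1 + l * t))" using mult_left_mono[OF e a] .
    also have "\<dots> < b"
    proof -
      have "(a + 1) / (b * l) \<le> t" using t unfolding T1_def .
      hence "a + 1 \<le> t * (b * l)" using b l by (simp add: divide_le_eq)
      moreover have "t * (b * l) = b * (l * t)" by (simp add: mult_ac)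
      moreover have "b * (1 + l * t) = b + b * (l * t)" by (simp add: algebra_simps)
      ultimately have "a < b * (1 + l * t)" using b by linarith
      hence "a / (1 + l * t) < b" using lt by (simp add: divide_less_eq mult.commute)
      thus ?thesis by simp
    qed
    finally show ?thesis .
  qed
  thus ?thesis by (auto intro: eventually_at_top_linorderI[of T1])
qed

lemma deriv_normsq:
  assumes "(X has_vector_derivative X') (at t within S)"
  shows "((\<lambda>t. norm (X t) ^ 2) has_real_derivative 2 * inner (X t) X') (at t within S)"
proof -
  have "((\<lambda>t. inner (X t) (X t)) has_vector_derivative (inner (X t) X' + inner X' (X t))) (at t within S)"
    using bounded_bilinear.has_vector_derivative[OF bounded_bilinear_inner assms assms] by simp
  moreover have "inner (X t) X' + inner X' (X t) = 2 * inner (X t) X'" by (simp add: inner_commute)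
  moreover have "(\<lambda>t. norm (X t) ^ 2) = (\<lambda>t. inner (X t) (X t))" by (simp add: power2_norm_eq_inner)
  ultimately show ?thesis by (simp add: has_real_derivative_iff_has_vector_derivative)
qed

lemma main_bound:
  fixes u :: "'k::finite \<Rightarrow> real \<Rightarrow> real^'n::finite^'n" and v :: "'k \<Rightarrow> real \<Rightarrow> real^'m::finite^'m"
    and \<Omega> :: "'k \<Rightarrow> real^'n^'n" and \<Psi> :: "'k \<Rightarrow> real^'m^'m"
  assumes ou: "\<And>j t. 0 \<le> t \<Longrightarrow> transpose (u j t) ** u j t = mat 1 \<and> u j t ** transpose (u j t) = mat 1"
    and ov: "\<And>j t. 0 \<le> t \<Longrightarrow> transpose (v j t) ** v j t = mat 1 \<and> v j t ** transpose (v j t) = mat 1"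
    and du: "\<And>j t. 0 \<le> t \<Longrightarrow> (u j has_vector_derivative
          (\<Omega> j ** u j t + (\<kappa> / real CARD('k)) *\<^sub>R
             (\<Sum>k\<in>UNIV. frob_inner (v j t) (v k t) *\<^sub>R (u k t - u j t ** transpose (u k t) ** u j t)))) (at t within {0..})"
    and dv: "\<And>j t. 0 \<le> t \<Longrightarrow> (v j has_vector_derivative
          (\<Psi> j ** v j t + (\<kappa> / real CARD('k)) *\<^sub>R
             (\<Sum>k\<in>UNIV. frob_inner (u j t) (u k t) *\<^sub>R (v k t - v j t ** transpose (v k t) ** v j t)))) (at t within {0..})"
    and skO: "\<And>j. transpose (\<Omega> j) = - \<Omega> j" and skP: "\<And>j. transpose (\<Psi> j) = - \<Psi> j"
    and kp: "\<kappa> > 0" and C: "C \<ge> 0"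
    and bO: "\<And>i j. norm (\<Omega> i - \<Omega> j) \<le> C" and bP: "\<And>i j. norm (\<Psi> i - \<Psi> j) \<le> C"
    and iu: "\<And>i j. norm (u i 0 - u j 0) ^ 2 < 1/4" and iv: "\<And>i j. norm (v i 0 - v j 0) ^ 2 < 1/4"
    and b: "b > 0" "b < 1/4" "(64 * C / (7 * \<kappa>)) ^ 2 \<le> b"
  shows "eventually (\<lambda>t. \<forall>i j. norm (u i t - u j t) ^ 2 < 2 * b \<and> norm (v i t - v j t) ^ 2 < 2 * b) at_top"
proof -
  define N where "N = real CARD('k)"
  define Du where "Du j t = \<Omega> j ** u j t + (\<kappa> / N) *\<^sub>R
             (\<Sum>k\<in>UNIV. frob_inner (v j t) (v k t) *\<^sub>R (u k t - u j t ** transpose (u k t) ** u j t))" for j t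
  define Dv where "Dv j t = \<Psi> j ** v j t + (\<kappa> / N) *\<^sub>R
             (\<Sum>k\<in>UNIV. frob_inner (u j t) (u k t) *\<^sub>R (v k t - v j t ** transpose (v k t) ** v j t))" for j t
  define F :: "('k \<times> 'k) + ('k \<times> 'k) \<Rightarrow> real \<Rightarrow> real" where
    "F p t = (case p of Inl (i, j) \<Rightarrow> norm (u i t - u j t) ^ 2 | Inr (i, j) \<Rightarrow> norm (v i t - v j t) ^ 2)" for p t
  define F' :: "('k \<times> 'k) + ('k \<times> 'k) \<Rightarrow> real \<Rightarrow> real" where
    "F' p t = (case p of Inl (i, j) \<Rightarrow> 2 * inner (u i t - u j t) (Du i t - Du j t)
        | Inr (i, j) \<Rightarrow> 2 * inner (v i t - v j t) (Dv i t - Dv j t))" for p t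
  define l where "l = 7/32 * \<kappa>"
  define \<phi> where "\<phi> t = b + (1/4 - b) * exp (- l * t)" for t
  define \<phi>' where "\<phi>' t = (1/4 - b) * (exp (- l * t) * (- l))" for t
  have lp: "l > 0" using kp by (simp add: l_def)
  have dF: "(F p has_real_derivative F' p t) (at t within {0..})" if "0 \<le> t" for p t
  proof (cases p)
    case (Inl ij)
    obtain i j where ij: "ij = (i, j)" by (cases ij)
    have "((\<lambda>t. u i t - u j t) has_vector_derivative (Du i t - Du j t)) (at t within {0..})"
      using du[OF that, of i] du[OF that, of j] unfolding Du_def N_def by (intro has_vector_derivative_diff)
    from deriv_normsq[OF this] show ?thesis unfolding F_def F'_def Inl ij by simp
  next
    case (Inr ij)
    obtain i j where ij: "ij = (i, j)" by (cases ij)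
    have "((\<lambda>t. v i t - v j t) has_vector_derivative (Dv i t - Dv j t)) (at t within {0..})"
      using dv[OF that, of i] dv[OF that, of j] unfolding Dv_def N_def by (intro has_vector_derivative_diff)
    from deriv_normsq[OF this] show ?thesis unfolding F_def F'_def Inr ij by simp
  qed
  have dphi: "(\<phi> has_real_derivative \<phi>' t) (at t within {0..})" for t
    unfolding \<phi>_def \<phi>'_def by (auto intro!: derivative_eq_intros)
  have sqb: "sqrt b \<ge> 64 * C / (7 * \<kappa>)"
    using real_sqrt_le_mono[OF b(3)] C kp by simp
  have key: "2 * sqrt w * C - 7/16 * \<kappa> * w < - l * (w - b)" if "b \<le> w" for w
  proof -
    have w0: "w \<ge> 0" using that b by simp
    have sw: "sqrt w \<ge> 64 * C / (7 * \<kappa>)" using sqb real_sqrt_le_mono[OF that] by linarith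
    have "7/32 * \<kappa> * w = 7/32 * \<kappa> * sqrt w * sqrt w" using w0 by (simp add: real_sqrt_mult_self mult.assoc)
    also have "\<dots> \<ge> 7/32 * \<kappa> * (64 * C / (7 * \<kappa>)) * sqrt w"
      by (intro mult_right_mono mult_left_mono) (use sw kp w0 in auto)
    finally have "7/32 * \<kappa> * w \<ge> 2 * C * sqrt w" using kp by (simp add: field_simps)
    moreover have "- l * (w - b) = - (7/32 * \<kappa> * w) + 7/32 * (\<kappa> * b)" unfolding l_def by (simp add: field_simps)
    moreover have "\<kappa> * b > 0" using kp b by simp
    moreover have "2 * sqrt w * C = 2 * C * sqrt w" by simp
    moreover have "7/16 * \<kappa> * w = 2 * (7/32 * \<kappa> * w)" by simp
    ultimately show ?thesis by linarith
  qed
  have all: "F p t < \<phi> t" if "0 \<le> t" for p t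
  proof (rule barrier[where f=F and f'=F' and \<phi>=\<phi> and \<phi>'=\<phi>' and T=t])
    show "(F p has_real_derivative F' p s) (at s within {0..})" if "0 \<le> s" "s \<le> t" for p s
      using dF[OF that(1)] .
    show "(\<phi> has_real_derivative \<phi>' s) (at s within {0..})" for s by (rule dphi)
    show "F p 0 < \<phi> 0" for p using iu iv by (auto simp: F_def \<phi>_def split: sum.splits)
    show "F' p s < \<phi>' s" if s: "0 < s" "s \<le> t" "F p s = \<phi> s" "\<forall>q. F q s \<le> \<phi> s" for p s
    proof -
      define w where "w = \<phi> s"
      have e1: "exp (- l * s) \<le> 1" using lp s(1) by simp
      have e0: "exp (- l * s) > 0" by simp
      have wb: "b < w" unfolding w_def \<phi>_def using b e0 by simp
      have w4: "w \<le> 1/4"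
      proof -
        have "(1/4 - b) * exp (- l * s) \<le> (1/4 - b) * 1" using e1 b by (intro mult_left_mono) auto
        thus ?thesis unfolding w_def \<phi>_def by simp
      qed
      have phid: "\<phi>' s = - l * (w - b)" unfolding w_def \<phi>_def \<phi>'_def by simp
      have bu: "norm (u a s - u c s) ^ 2 \<le> w" for a c using s(4) unfolding w_def by (auto simp: F_def dest: spec[of _ "Inl (a, c)"])
      have bv: "norm (v a s - v c s) ^ 2 \<le> w" for a c using s(4) unfolding w_def by (auto simp: F_def dest: spec[of _ "Inr (a, c)"])
      show ?thesis
      proof (cases p)
        case (Inl ij)
        obtain i j where ij: "ij = (i, j)" by (cases ij)
        have vij: "norm (u i s - u j s) ^ 2 = w" using s(3) unfolding w_def F_def Inl ij by simp
        have "2 * inner ((\<lambda>j. u j s) i - (\<lambda>j. u j s) j) ((\<lambda>j. Du j s) i - (\<lambda>j. Du j s) j)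
            \<le> 2 * sqrt w * norm (\<Omega> i - \<Omega> j) - 7/16 * \<kappa> * w"
          by (rule side_est[where z="\<lambda>j. v j s"])
             (use ou ov s(1) kp bu bv w4 vij skO skP in \<open>auto simp: Du_def N_def\<close>)
        also have "\<dots> \<le> 2 * sqrt w * C - 7/16 * \<kappa> * w"
          using bO[of i j] wb b by (simp add: mult_left_mono)
        also have "\<dots> < \<phi>' s" unfolding phid using key[of w] wb by simp
        finally show ?thesis unfolding F'_def Inl ij by simp
      next
        case (Inr ij)
        obtain i j where ij: "ij = (i, j)" by (cases ij)
        have vij: "norm (v i s - v j s) ^ 2 = w" using s(3) unfolding w_def F_def Inr ij by simp
        have "2 * inner ((\<lambda>j. v j s) i - (\<lambda>j. v j s) j) ((\<lambda>j. Dv j s) i - (\<lambda>j. Dv j s) j)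
            \<le> 2 * sqrt w * norm (\<Psi> i - \<Psi> j) - 7/16 * \<kappa> * w"
          by (rule side_est[where z="\<lambda>j. u j s"])
             (use ou ov s(1) kp bu bv w4 vij skO skP in \<open>auto simp: Dv_def N_def\<close>)
        also have "\<dots> \<le> 2 * sqrt w * C - 7/16 * \<kappa> * w"
          using bP[of i j] wb b by (simp add: mult_left_mono)
        also have "\<dots> < \<phi>' s" unfolding phid using key[of w] wb by simp
        finally show ?thesis unfolding F'_def Inr ij by simp
      qed
    qed
  qed (use that in auto)
  have ev: "eventually (\<lambda>t. (1/4 - b) * exp (- l * t) < b) at_top"
    by (rule exp_decay_eventually) (use lp b in auto)
  show ?thesis
    using ev eventually_ge_at_top[of 0]
  proof eventually_elim
    case (elim t)
    have "F p t < 2 * b" for p using all[OF elim(2), of p] elim(1) unfolding \<phi>_def by simp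
    from this[of "Inl (i, j)" for i j] this[of "Inr (i, j)" for i j]
    show ?case unfolding F_def by auto
  qed
qed

lemma Max_range_ge: "f x \<le> Max (range (f::'a::finite \<Rightarrow> real))"
  by (rule Max_ge) auto

lemma Max_range_le: "(\<And>x. f x \<le> B) \<Longrightarrow> Max (range (f::'a::finite \<Rightarrow> real)) \<le> B"
  by (rule Max.boundedI) auto

lemma mat_inf_norm_row: "(\<Sum>j\<in>UNIV. \<bar>(A::real^'n::finite^'m::finite)$i$j\<bar>) \<le> mat_inf_norm A"
  unfolding mat_inf_norm_def by (rule Max_range_ge[of "\<lambda>i. \<Sum>j\<in>UNIV. \<bar>A$i$j\<bar>"])

lemma mat_inf_norm_nonneg: "mat_inf_norm (A::real^'n::finite^'m::finite) \<ge> 0"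
  using mat_inf_norm_row[of A undefined] by (meson order_trans sum_nonneg abs_ge_zero)

lemma norm_le_inf: "norm (A::real^'n::finite^'m::finite) \<le> sqrt (real CARD('m)) * mat_inf_norm A"
proof -
  define M where "M = mat_inf_norm A"
  have M0: "M \<ge> 0" unfolding M_def by (rule mat_inf_norm_nonneg)
  have r: "norm (A$i) \<le> M" for i
    using norm_le_l1_cart[of "A$i"] mat_inf_norm_row[of A i] unfolding M_def by linarith
  have "norm A ^ 2 = (\<Sum>i\<in>UNIV. norm (A$i) ^ 2)"
    by (simp add: power2_norm_eq_inner inner_vec_def)
  also have "\<dots> \<le> (\<Sum>i\<in>(UNIV::'m set). M ^ 2)"
  proof (rule sum_mono)
    fix i :: 'm
    show "norm (A$i) ^ 2 \<le> M ^ 2" using r[of i] by (simp add: power_mono)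
  qed
  also have "\<dots> = real CARD('m) * M ^ 2" by simp
  finally have "norm A \<le> sqrt (real CARD('m) * M ^ 2)" by (rule real_le_rsqrt)
  also have "\<dots> = sqrt (real CARD('m)) * M" using M0 by (simp add: real_sqrt_mult)
  finally show ?thesis unfolding M_def .
qed

lemma diam_inf_ge: "mat_inf_norm (W i - W j) \<le> diam_inf (W::'k::finite \<Rightarrow> real^'n::finite^'n)"
  unfolding diam_inf_def using Max_range_ge[of "\<lambda>(i,j). mat_inf_norm (W i - W j)" "(i,j)"] by simp

lemma diam_inf_nonneg: "diam_inf (W::'k::finite \<Rightarrow> real^'n::finite^'n) \<ge> 0"
  using diam_inf_ge[of W undefined undefined] mat_inf_norm_nonneg[of "W undefined - W undefined"] by linarith

lemma diam_F_ge: "norm (X i - X j) \<le> diam_F (X::'k::finite \<Rightarrow> real^'n::finite^'n)"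
  unfolding diam_F_def using Max_range_ge[of "\<lambda>(i,j). frob_norm (X i - X j)" "(i,j)"] by (simp add: frob_norm_eq)

lemma diam_F_nonneg: "diam_F (X::'k::finite \<Rightarrow> real^'n::finite^'n) \<ge> 0"
  using diam_F_ge[of X undefined undefined] norm_ge_zero[of "X undefined - X undefined"] by linarith

lemma sep_F_nonneg: "sep_F (X::'k::finite \<Rightarrow> real^'n::finite^'n) \<ge> 0"
  unfolding sep_F_def
  using Max_range_ge[of "\<lambda>(i,j). \<bar>real CARD('n) - frob_inner (X i) (X j)\<bar>" "(undefined, undefined)"]
  by (smt (verit) case_prod_conv abs_ge_zero)

lemma lyap_init:
  assumes "lyapL X Y < r"
  shows "norm ((X::'k::finite \<Rightarrow> real^'n::finite^'n) i - X j) < r"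
  using assms diam_F_ge[of X i j] diam_F_nonneg[of Y] sep_F_nonneg[of X] sep_F_nonneg[of Y]
  unfolding lyapL_def by linarith

lemma lyap_nonneg: "lyapL (X::'k::finite \<Rightarrow> real^'n::finite^'n) (Y::'k \<Rightarrow> real^'m::finite^'m) \<ge> 0"
  using diam_F_nonneg[of X] diam_F_nonneg[of Y] sep_F_nonneg[of X] sep_F_nonneg[of Y]
  unfolding lyapL_def by linarith

lemma sep_eq:
  assumes "transpose x ** x = mat 1" "transpose y ** y = mat 1"
  shows "\<bar>real CARD('n) - frob_inner x y\<bar> = norm ((x::real^'n::finite^'n) - y) ^ 2 / 2"
proof -
  have "norm (x - y) ^ 2 = inner x x + inner y y - 2 * inner x y"
    by (simp add: power2_norm_eq_inner inner_diff_left inner_diff_right inner_commute)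
  also have "inner x x = real CARD('n)" by (rule orth_norm_sq[OF assms(1)])
  also have "inner y y = real CARD('n)" by (rule orth_norm_sq[OF assms(2)])
  finally have eq: "real CARD('n) - inner x y = norm (x - y) ^ 2 / 2" by linarith
  show ?thesis unfolding frob_inner_eq eq by simp
qed

lemma diam_sep_le:
  assumes o: "\<And>j. transpose (X j) ** X j = mat 1" and bX: "\<And>i j. norm (X i - X j) ^ 2 \<le> B"
  shows "diam_F (X::'k::finite \<Rightarrow> real^'n::finite^'n) \<le> sqrt B \<and> sep_F X \<le> B / 2"
proof
  show "diam_F X \<le> sqrt B" unfolding diam_F_def
    by (rule Max_range_le) (auto simp: frob_norm_eq intro!: real_le_rsqrt bX)
  show "sep_F X \<le> B / 2" unfolding sep_F_def
    by (rule Max_range_le) (auto simp: sep_eq[OF o o] intro!: divide_right_mono bX)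
qed

lemma lyap_init2:
  assumes "lyapL X Y < r"
  shows "norm ((Y::'k::finite \<Rightarrow> real^'m::finite^'m) i - Y j) < r"
  using assms diam_F_ge[of Y i j] diam_F_nonneg[of X] sep_F_nonneg[of X] sep_F_nonneg[of Y]
  unfolding lyapL_def by linarith

theorem propositionC1:
  fixes \<Omega> :: "'k::finite \<Rightarrow> real^'n::finite^'n"
    and \<Psi> :: "'k \<Rightarrow> real^'m::finite^'m"
    and U0 :: "'k \<Rightarrow> real^'n^'n" and V0 :: "'k \<Rightarrow> real^'m^'m"
    and U :: "real \<Rightarrow> 'k \<Rightarrow> real \<Rightarrow> real^'n^'n"
    and V :: "real \<Rightarrow> 'k \<Rightarrow> real \<Rightarrow> real^'m^'m"
  defines "Adm \<equiv> {\<kappa>. \<kappa> > kappa_c (real CARD('n)) (real CARD('m)) (diam_inf \<Omega>)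
                    \<and> lyapL U0 V0 < nu2 (real CARD('n)) (real CARD('m)) (diam_inf \<Omega>) \<kappa>}"
  assumes nm: "CARD('m) \<le> CARD('n)"
    and skewO: "\<And>j. transpose (\<Omega> j) = - \<Omega> j"
    and skewP: "\<And>j. transpose (\<Psi> j) = - \<Psi> j"
    and diam: "diam_inf \<Psi> \<le> diam_inf \<Omega>"
    and init_SO: "\<And>j. rotation_matrix (U0 j) \<and> rotation_matrix (V0 j)"
    and init: "\<And>\<kappa> j. \<kappa> \<in> Adm \<Longrightarrow> U \<kappa> j 0 = U0 j \<and> V \<kappa> j 0 = V0 j"
    and odeU: "\<And>\<kappa> j t. \<kappa> \<in> Adm \<Longrightarrow> t \<ge> 0 \<Longrightarrow>
       (U \<kappa> j has_vector_derivative
          (\<Omega> j ** U \<kappa> j t + (\<kappa> / real CARD('k)) *\<^sub>R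
             (\<Sum>k\<in>UNIV. frob_inner (V \<kappa> j t) (V \<kappa> k t) *\<^sub>R
                 (U \<kappa> k t - U \<kappa> j t ** transpose (U \<kappa> k t) ** U \<kappa> j t))))
       (at t within {0..})"
    and odeV: "\<And>\<kappa> j t. \<kappa> \<in> Adm \<Longrightarrow> t \<ge> 0 \<Longrightarrow>
       (V \<kappa> j has_vector_derivative
          (\<Psi> j ** V \<kappa> j t + (\<kappa> / real CARD('k)) *\<^sub>R
             (\<Sum>k\<in>UNIV. frob_inner (U \<kappa> j t) (U \<kappa> k t) *\<^sub>R
                 (V \<kappa> k t - V \<kappa> j t ** transpose (V \<kappa> k t) ** V \<kappa> j t))))
       (at t within {0..})"
  shows "((\<lambda>\<kappa>. Limsup at_top (\<lambda>t. ereal (lyapL (\<lambda>j. U \<kappa> j t) (\<lambda>j. V \<kappa> j t))))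
            \<longlongrightarrow> 0) (inf at_top (principal Adm))"
proof -
  define n where "n = real CARD('n)"
  define m where "m = real CARD('m)"
  define DO where "DO = diam_inf \<Omega>"
  define C where "C = sqrt n * DO"
  have n1: "n \<ge> 1" and m1: "m \<ge> 1" unfolding n_def m_def by simp_all
  have mn: "m \<le> n" unfolding m_def n_def using nm by simp
  have DO0: "DO \<ge> 0" unfolding DO_def by (rule diam_inf_nonneg)
  have C0: "C \<ge> 0" unfolding C_def using DO0 n1 by simp
  have bO: "norm (\<Omega> i - \<Omega> j) \<le> C" for i j
  proof -
    have "norm (\<Omega> i - \<Omega> j) \<le> sqrt n * mat_inf_norm (\<Omega> i - \<Omega> j)" unfolding n_def by (rule norm_le_inf)
    also have "\<dots> \<le> sqrt n * DO" unfolding DO_def by (intro mult_left_mono diam_inf_ge) (use n1 in simp)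
    finally show ?thesis unfolding C_def .
  qed
  have bP: "norm (\<Psi> i - \<Psi> j) \<le> C" for i j
  proof -
    have "norm (\<Psi> i - \<Psi> j) \<le> sqrt m * mat_inf_norm (\<Psi> i - \<Psi> j)" unfolding m_def by (rule norm_le_inf)
    also have "\<dots> \<le> sqrt m * diam_inf \<Psi>" by (intro mult_left_mono diam_inf_ge) (use m1 in simp)
    also have "\<dots> \<le> sqrt n * DO"
      by (intro mult_mono) (use diam mn m1 diam_inf_nonneg[of \<Psi>] in \<open>auto simp: DO_def\<close>)
    finally show ?thesis unfolding C_def .
  qed
  define K where "K = (64 * C / 7) ^ 2"
  define bb where "bb \<kappa> = K * (inverse \<kappa>) ^ 2 + inverse \<kappa>" for \<kappa> :: real
  define hh where "hh \<kappa> = 2 * sqrt (2 * bb \<kappa>) + 2 * bb \<kappa>" for \<kappa>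
  define LS where "LS \<kappa> = Limsup at_top (\<lambda>t. ereal (lyapL (\<lambda>j. U \<kappa> j t) (\<lambda>j. V \<kappa> j t)))" for \<kappa>
  have adm: "\<kappa> > 0 \<and> lyapL U0 V0 < 1/2" if k: "\<kappa> \<in> Adm" for \<kappa>
  proof -
    have kc: "\<kappa> > kappa_c n m DO" and lt: "lyapL U0 V0 < nu2 n m DO \<kappa>"
      using k unfolding Adm_def n_def m_def DO_def by auto
    from adm_facts[OF n1 m1 mn DO0 kc] lt show ?thesis by simp
  qed
  have orthU: "transpose (U \<kappa> j t) ** U \<kappa> j t = mat 1 \<and> U \<kappa> j t ** transpose (U \<kappa> j t) = mat 1"
    if k: "\<kappa> \<in> Adm" and t: "0 \<le> t" for \<kappa> j t
  proof -
    have cU: "continuous_on {0..} (U \<kappa> k)" for k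
      by (rule continuous_on_vector_derivative) (use odeU[OF k] in auto)
    have cV: "continuous_on {0..} (V \<kappa> k)" for k
      by (rule continuous_on_vector_derivative) (use odeV[OF k] in auto)
    have cw: "continuous_on {0..} (\<lambda>t. frob_inner (V \<kappa> j t) (V \<kappa> k t))" for k
      unfolding frob_inner_eq by (intro continuous_on_inner cV)
    have u0: "transpose (U \<kappa> j 0) ** U \<kappa> j 0 = mat 1"
      using init[OF k, of j] init_SO[of j] by (simp add: rotation_matrix_def orthogonal_matrix_def)
    have "transpose (U \<kappa> j t) ** U \<kappa> j t = mat 1"
      by (rule orth_preserve[where z="\<lambda>k. U \<kappa> k" and w="\<lambda>k t. frob_inner (V \<kappa> j t) (V \<kappa> k t)"
            and c="\<kappa> / real CARD('k)" and Om="\<Omega> j"])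
         (use odeU[OF k] cU cw skewO u0 t in auto)
    thus ?thesis by (metis orthogonal_matrix orthogonal_matrix_def)
  qed
  have orthV: "transpose (V \<kappa> j t) ** V \<kappa> j t = mat 1 \<and> V \<kappa> j t ** transpose (V \<kappa> j t) = mat 1"
    if k: "\<kappa> \<in> Adm" and t: "0 \<le> t" for \<kappa> j t
  proof -
    have cU: "continuous_on {0..} (U \<kappa> k)" for k
      by (rule continuous_on_vector_derivative) (use odeU[OF k] in auto)
    have cV: "continuous_on {0..} (V \<kappa> k)" for k
      by (rule continuous_on_vector_derivative) (use odeV[OF k] in auto)
    have cw: "continuous_on {0..} (\<lambda>t. frob_inner (U \<kappa> j t) (U \<kappa> k t))" for k
      unfolding frob_inner_eq by (intro continuous_on_inner cU)
    have v0: "transpose (V \<kappa> j 0) ** V \<kappa> j 0 = mat 1"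
      using init[OF k, of j] init_SO[of j] by (simp add: rotation_matrix_def orthogonal_matrix_def)
    have "transpose (V \<kappa> j t) ** V \<kappa> j t = mat 1"
      by (rule orth_preserve[where z="\<lambda>k. V \<kappa> k" and w="\<lambda>k t. frob_inner (U \<kappa> j t) (U \<kappa> k t)"
            and c="\<kappa> / real CARD('k)" and Om="\<Psi> j"])
         (use odeV[OF k] cV cw skewP v0 t in auto)
    thus ?thesis by (metis orthogonal_matrix orthogonal_matrix_def)
  qed
  have upper: "LS \<kappa> \<le> ereal (hh \<kappa>)" if k: "\<kappa> \<in> Adm" and b4: "bb \<kappa> < 1/4" for \<kappa>
  proof -
    have kp: "\<kappa> > 0" and l0: "lyapL U0 V0 < 1/2" using adm[OF k] by auto
    have ip: "inverse \<kappa> > 0" using kp by simp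
    have bpos: "bb \<kappa> > 0" unfolding bb_def K_def using ip by (simp add: add_nonneg_pos)
    have bK: "(64 * C / (7 * \<kappa>)) ^ 2 \<le> bb \<kappa>"
    proof -
      have "(64 * C / (7 * \<kappa>)) ^ 2 = K * (inverse \<kappa>) ^ 2" unfolding K_def
        by (simp add: field_simps power2_eq_square)
      thus ?thesis unfolding bb_def using ip by simp
    qed
    have sq: "x < 1/2 \<Longrightarrow> 0 \<le> x \<Longrightarrow> x ^ 2 < 1/4" for x :: real
      using mult_strict_mono[of x "1/2" x "1/2"] by (simp add: power2_eq_square)
    have iu: "norm (U \<kappa> i 0 - U \<kappa> j 0) ^ 2 < 1/4" for i j
      using sq[OF lyap_init[OF l0, of i j]] init[OF k, of i] init[OF k, of j] by simp
    have iv: "norm (V \<kappa> i 0 - V \<kappa> j 0) ^ 2 < 1/4" for i j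
      using sq[OF lyap_init2[OF l0, of i j]] init[OF k, of i] init[OF k, of j] by simp
    have ev: "eventually (\<lambda>t. \<forall>i j. norm (U \<kappa> i t - U \<kappa> j t) ^ 2 < 2 * bb \<kappa> \<and> norm (V \<kappa> i t - V \<kappa> j t) ^ 2 < 2 * bb \<kappa>) at_top"
      by (rule main_bound[where \<Omega>=\<Omega> and \<Psi>=\<Psi> and \<kappa>=\<kappa> and C=C])
         (use orthU[OF k] orthV[OF k] odeU[OF k] odeV[OF k] skewO skewP kp C0 bO bP iu iv bpos b4 bK in auto)
    have "eventually (\<lambda>t. ereal (lyapL (\<lambda>j. U \<kappa> j t) (\<lambda>j. V \<kappa> j t)) \<le> ereal (hh \<kappa>)) at_top"
      using ev eventually_ge_at_top[of 0]
    proof eventually_elim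
      case (elim t)
      have dU: "diam_F (\<lambda>j. U \<kappa> j t) \<le> sqrt (2 * bb \<kappa>) \<and> sep_F (\<lambda>j. U \<kappa> j t) \<le> 2 * bb \<kappa> / 2"
        by (rule diam_sep_le) (use orthU[OF k elim(2)] elim(1) in \<open>auto intro: less_imp_le\<close>)
      have dV: "diam_F (\<lambda>j. V \<kappa> j t) \<le> sqrt (2 * bb \<kappa>) \<and> sep_F (\<lambda>j. V \<kappa> j t) \<le> 2 * bb \<kappa> / 2"
        by (rule diam_sep_le) (use orthV[OF k elim(2)] elim(1) in \<open>auto intro: less_imp_le\<close>)
      show ?case using dU dV unfolding lyapL_def hh_def by simp
    qed
    thus ?thesis unfolding LS_def by (rule Limsup_bounded)
  qed
  have lower: "0 \<le> LS \<kappa>" for \<kappa>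
    unfolding LS_def by (rule le_Limsup) (auto simp: lyap_nonneg)
  have bb0: "(bb \<longlongrightarrow> 0) at_top"
  proof -
    have "((\<lambda>x::real. inverse x) \<longlongrightarrow> 0) at_top" by (rule tendsto_inverse_0_at_top[OF filterlim_ident])
    hence "((\<lambda>x. K * (inverse x) ^ 2 + inverse x) \<longlongrightarrow> K * 0 ^ 2 + 0) at_top"
      by (intro tendsto_intros)
    thus ?thesis unfolding bb_def by simp
  qed
  have hh0: "(hh \<longlongrightarrow> 0) at_top"
  proof -
    have "((\<lambda>x. 2 * sqrt (2 * bb x) + 2 * bb x) \<longlongrightarrow> 2 * sqrt (2 * 0) + 2 * 0) at_top"
      by (intro tendsto_intros bb0)
    thus ?thesis unfolding hh_def by simp
  qed
  let ?F = "inf at_top (principal Adm)"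
  have evb: "eventually (\<lambda>\<kappa>. bb \<kappa> < 1/4) at_top" using order_tendstoD(2)[OF bb0, of "1/4"] by simp
  have "(LS \<longlongrightarrow> 0) ?F"
  proof (rule tendsto_sandwich[where f="\<lambda>_. 0" and h="\<lambda>\<kappa>. ereal (hh \<kappa>)"])
    show "eventually (\<lambda>\<kappa>. 0 \<le> LS \<kappa>) ?F" using lower by simp
    show "eventually (\<lambda>\<kappa>. LS \<kappa> \<le> ereal (hh \<kappa>)) ?F"
      unfolding eventually_inf_principal using evb by eventually_elim (use upper in auto)
    show "((\<lambda>_. 0::ereal) \<longlongrightarrow> 0) ?F" by simp
    have "((\<lambda>\<kappa>. ereal (hh \<kappa>)) \<longlongrightarrow> ereal 0) at_top" by (rule tendsto_ereal[OF hh0])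
    thus "((\<lambda>\<kappa>. ereal (hh \<kappa>)) \<longlongrightarrow> 0) ?F"
      by (simp add: zero_ereal_def tendsto_mono[OF inf_le1])
  qed
  thus ?thesis unfolding LS_def .
qed

end
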